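(* Consider the multi-market oligopoly of equal capacity $\mathcal{G}$ described in the context, and suppose: each $u_x$ ($x\in E$) is concave and differentiable; $c$ is convex and differentiable; and at least one of the following holds: (a) all but at most one of the $u_x$ are strictly concave, or (b) $c$ is strictly convex. Then every pure-strategy Nash equilibrium $\mathbf{S}^*=(\mathbf{s}_i^* )_{i=1}^n$ of $\mathcal{G}$ is symmetric, i.e. $\mathbf{s}_i^*=\mathbf{s}_j^*$ for all $i,j\in N$.
   Context: Let $N=\{1,\dots,n\}$ be a set of firms (players) and $E=\{1,\dots,m\}$ a set of markets. Let $\Delta^{m-1}=\{\mathbf{v}\in\mathbb{R}^m:\mathbf{v}\ge 0,\ \mathbf{v}^{T}\mathbf{1}=1\}$. Each firm $i$ chooses a strategy $\mathbf{s}_i=(s_{ix})_{x=1}^m\in S_i=\Delta^{m-1}$. For each market $x$ let $u_x:\mathbb{R}_{\ge 0}\to\mathbb{R}_{\ge 0}$ with $u_x(0)=0$, and let $p_x(t)=u_x(t)/t$ for $t>0$. Let $c:\Delta^{m-1}\to\mathbb{R}_{\ge 0}$ be a common cost function. For a strategy profile $\mathbf{S}=(\mathbf{s}_i)_{i=1}^n$ put $s_x=\sum_{i=1}^n s_{ix}$ and $\mathbf{s}_{-i}=\sum_{j\ne i}\mathbf{s}_j$. The payoff of player $i$ is $u_i(\mathbf{s}_i;\mathbf{s}_{-i})=\sum_{x=1}^m p_x(s_x)s_{ix}-c(\mathbf{s}_i)$ (a term with $s_x=0$ is taken to be $0$). The game is $\mathcal{G}=(N,S,(u_i)_{i=1}^n)$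 with $S=\prod_{i=1}^n\Delta^{m-1}$. *)

theory Defs
  imports "HOL-Analysis.Analysis"
begin

definition strictly_convex_on :: "'a::real_vector set \<Rightarrow> ('a \<Rightarrow> real) \<Rightarrow> bool" where
  "strictly_convex_on S f \<longleftrightarrow>
     (\<forall>x\<in>S. \<forall>y\<in>S. x \<noteq> y \<longrightarrow> (\<forall>t::real. 0 < t \<and> t < 1 \<longrightarrow>
        f ((1 - t) *\<^sub>R x + t *\<^sub>R y) < (1 - t) * f x + t * f y))"

definition strictly_concave_on :: "'a::real_vector set \<Rightarrow> ('a \<Rightarrow> real) \<Rightarrow> bool" where
  "strictly_concave_on S f \<longleftrightarrow> strictly_convex_on S (\<lambda>x. - f x)"

definition strategy_simplex :: "(real ^ 'm::finite) set" where
  "strategy_simplex = {v. (\<forall>x. 0 \<le> v $ x) \<and> (\<Sum>x\<in>UNIV. v $ x) = 1}"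

definition payoff :: "('m::finite \<Rightarrow> real \<Rightarrow> real) \<Rightarrow> (real ^ 'm \<Rightarrow> real)
    \<Rightarrow> real ^ 'm \<Rightarrow> real ^ 'm \<Rightarrow> real" where
  "payoff u c si s_others =
     (\<Sum>x\<in>UNIV. (let sx = si $ x + s_others $ x in
                   if sx = 0 then 0 else (u x sx / sx) * si $ x)) - c si"

definition others :: "nat \<Rightarrow> (nat \<Rightarrow> real ^ 'm::finite) \<Rightarrow> nat \<Rightarrow> real ^ 'm" where
  "others n S i = (\<Sum>j\<in>{1..n} - {i}. S j)"

definition nash_equilibrium :: "nat \<Rightarrow> ('m::finite \<Rightarrow> real \<Rightarrow> real) \<Rightarrow> (real ^ 'm \<Rightarrow> real)
    \<Rightarrow> (nat \<Rightarrow> real ^ 'm) \<Rightarrow> bool" where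
  "nash_equilibrium n u c S \<longleftrightarrow>
     (\<forall>i\<in>{1..n}. S i \<in> strategy_simplex) \<and>
     (\<forall>i\<in>{1..n}. \<forall>s\<in>strategy_simplex. payoff u c s (others n S i) \<le> payoff u c (S i) (others n S i))"

end

theory Submission
  imports Defs
begin

lemma tangent_le:
  fixes f :: "real \<Rightarrow> real"
  assumes conc: "concave_on {0..} f" and f0: "f 0 = 0" and T: "T > 0"
    and d: "(f has_real_derivative d) (at T)"
    and y: "y \<ge> 0"
  shows "f y - f T \<le> d * (y - T)"
proof -
  have cv: "convex_on {0..} (\<lambda>x. - f x)" using conc by (simp add: concave_on_def)
  have dm: "((\<lambda>x. - f x) has_real_derivative (- d)) (at T within {0..})"
    using DERIV_minus[OF d] has_field_derivative_at_within by blast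
  have intr: "T \<in> interior {0::real..}" using T by simp
  have "(- f y) - (- f T) \<ge> (- d) * (y - T)"
    by (rule convex_on_imp_above_tangent[OF cv _ intr _ dm]) (use y in auto)
  then show "f y - f T \<le> d * (y - T)" by simp
qed

lemma tangent_less:
  fixes f :: "real \<Rightarrow> real"
  assumes conc: "concave_on {0..} f" and sc: "strictly_concave_on {0..} f"
    and f0: "f 0 = 0" and T: "T > 0"
    and d: "(f has_real_derivative d) (at T)"
  shows "d * T < f T"
proof -
  have "- f ((1 - 1/2) *\<^sub>R 0 + (1/2) *\<^sub>R T) < (1 - 1/2) * (- f 0) + (1/2) * (- f T)"
  proof -
    have m: "0 \<in> {0::real..}" "T \<in> {0..}" "(0::real) \<noteq> T" using T by auto
    have "\<forall>t::real. 0 < t \<and> t < 1 \<longrightarrow> - f ((1 - t) *\<^sub>R 0 + t *\<^sub>R T) < (1 - t) * (- f 0) + t * (- f T)"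
      using sc m unfolding strictly_concave_on_def strictly_convex_on_def by blast
    then show ?thesis by (erule_tac allE[of _ "1/2"]) simp
  qed
  then have a: "f (T/2) > f T / 2" using f0 by simp
  have "f (T/2) - f T \<le> d * (T/2 - T)" using tangent_le[OF conc f0 T d, of "T/2"] T by simp
  with a show ?thesis by (simp add: algebra_simps)
qed

lemma coord_deriv:
  fixes g :: "real \<Rightarrow> real"
  assumes dg: "(g has_real_derivative Dg) (at T)"
  shows "((\<lambda>e. g (T + e*(b - a)) * (a + e*(b-a)) - g T * a
              + g (T - e*(b-a)) * (b - e*(b-a)) - g T * b) has_real_derivative
          (- Dg * (b-a)^2)) (at 0)"
proof -
  have d1: "DERIV (\<lambda>e. g (T + e*(b - a))) 0 :> Dg * (b-a)"
  proof -
    have "DERIV g (T + 0*(b-a)) :> Dg" using dg by simp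
    moreover have "DERIV (\<lambda>e. T + e*(b-a)) 0 :> (b-a)"
      by (auto intro!: derivative_eq_intros)
    ultimately show ?thesis by (rule DERIV_chain2)
  qed
  have d2: "DERIV (\<lambda>e. g (T - e*(b - a))) 0 :> Dg * (-(b-a))"
  proof -
    have "DERIV g (T - 0*(b-a)) :> Dg" using dg by simp
    moreover have "DERIV (\<lambda>e. T - e*(b-a)) 0 :> (-(b-a))"
      by (auto intro!: derivative_eq_intros)
    ultimately show ?thesis by (rule DERIV_chain2)
  qed
  show ?thesis
    apply (rule derivative_eq_intros d1 d2 refl)+
    by (simp add: algebra_simps power2_eq_square)
qed

lemma cost_bound:
  fixes c :: "'a::real_vector \<Rightarrow> real"
  assumes cv: "convex_on K c" and si: "si \<in> K" and sj: "sj \<in> K"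
    and e: "0 < e" "e \<le> 1/3"
  defines "w \<equiv> \<lambda>t. (1 - t) *\<^sub>R si + t *\<^sub>R sj"
  shows "c (w e) - c si + c (w (1-e)) - c sj
          \<le> - (3 * (c si + c sj - c (w (1/3)) - c (w (2/3)))) * e"
proof -
  have cK: "convex K" using cv by (simp add: convex_on_def)
  have wK: "w t \<in> K" if "0 \<le> t" "t \<le> 1" for t
    unfolding w_def using convexD[OF cK si sj, of "1-t" t] that by simp
  have w1: "w e = (1 - 3*e) *\<^sub>R si + (3*e) *\<^sub>R w (1/3)"
    unfolding w_def apply (simp add: algebra_simps scaleR_add_right)
    by (simp add: scaleR_add_left[symmetric])
  have w2: "w (1-e) = (1 - 3*e) *\<^sub>R sj + (3*e) *\<^sub>R w (2/3)"
    unfolding w_def apply (simp add: algebra_simps scaleR_add_right)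
    by (simp add: scaleR_add_left[symmetric])
  have "c (w e) \<le> (1 - 3*e) * c si + (3*e) * c (w (1/3))"
    unfolding w1 by (rule convex_onD[OF cv]) (use e si wK in auto)
  moreover have "c (w (1-e)) \<le> (1 - 3*e) * c sj + (3*e) * c (w (2/3))"
    unfolding w2 by (rule convex_onD[OF cv]) (use e sj wK in auto)
  ultimately show ?thesis by (simp add: algebra_simps)
qed

lemma cost_kappa:
  fixes c :: "'a::real_vector \<Rightarrow> real"
  assumes cv: "convex_on K c" and si: "si \<in> K" and sj: "sj \<in> K"
  defines "w \<equiv> \<lambda>t. (1 - t) *\<^sub>R si + t *\<^sub>R sj"
  shows "0 \<le> 3 * (c si + c sj - c (w (1/3)) - c (w (2/3)))"
    and "strictly_convex_on K c \<Longrightarrow> si \<noteq> sj \<Longrightarrow> 0 < 3 * (c si + c sj - c (w (1/3)) - c (w (2/3)))"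
proof -
  have a: "c (w (1/3)) \<le> (1 - 1/3) * c si + (1/3) * c sj"
    unfolding w_def by (rule convex_onD[OF cv]) (use si sj in auto)
  have b: "c (w (2/3)) \<le> (1 - 2/3) * c si + (2/3) * c sj"
    unfolding w_def by (rule convex_onD[OF cv]) (use si sj in auto)
  from a b show "0 \<le> 3 * (c si + c sj - c (w (1/3)) - c (w (2/3)))" by simp
  assume sc: "strictly_convex_on K c" and ne: "si \<noteq> sj"
  have "\<forall>t::real. 0 < t \<and> t < 1 \<longrightarrow> c ((1 - t) *\<^sub>R si + t *\<^sub>R sj) < (1 - t) * c si + t * c sj"
    using sc si sj ne unfolding strictly_convex_on_def by blast
  then have a': "c (w (1/3)) < (1 - 1/3) * c si + (1/3) * c sj"
    unfolding w_def by (erule_tac allE[of _ "1/3"]) simp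
  from a' b show "0 < 3 * (c si + c sj - c (w (1/3)) - c (w (2/3)))" by simp
qed


lemma payoff_eq:
  "payoff u c y a = (\<Sum>x\<in>UNIV. u x (y$x + a$x) / (y$x + a$x) * y$x) - c y"
  unfolding payoff_def Let_def by (intro arg_cong2[where f="(-)"] sum.cong) auto

lemma core:
  fixes u :: "'m::finite \<Rightarrow> real \<Rightarrow> real"
    and c :: "real ^ 'm \<Rightarrow> real"
    and si sj a b :: "real ^ 'm"
  assumes u_zero: "\<And>x. u x 0 = 0"
    and u_concave: "\<And>x. concave_on {0..} (u x)"
    and u_diff: "\<And>x t. 0 \<le> t \<Longrightarrow> u x differentiable (at t within {0..})"
    and c_convex: "convex_on strategy_simplex c"
    and strict: "card {x. \<not> strictly_concave_on {0..} (u x)} \<le> 1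
                 \<or> strictly_convex_on strategy_simplex c"
    and si: "si \<in> strategy_simplex" and sj: "sj \<in> strategy_simplex"
    and a0: "\<And>x. 0 \<le> a$x" and b0: "\<And>x. 0 \<le> b$x"
    and ab: "si + a = sj + b"
    and opti: "\<And>y. y \<in> strategy_simplex \<Longrightarrow> payoff u c y a \<le> payoff u c si a"
    and optj: "\<And>y. y \<in> strategy_simplex \<Longrightarrow> payoff u c y b \<le> payoff u c sj b"
    and ne: "si \<noteq> sj"
  shows False
proof -
  define w where "w = (\<lambda>t::real. (1 - t) *\<^sub>R si + t *\<^sub>R sj)"
  define \<kappa> where "\<kappa> = 3 * (c si + c sj - c (w (1/3)) - c (w (2/3)))"
  define T where "T = si + a"
  define g where "g = (\<lambda>x t. u x t / t)"
  define F where "F = (\<lambda>x e. g x (T$x + e*(sj$x - si$x)) * (si$x + e*(sj$x-si$x)) - g x (T$x) * si$x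
              + g x (T$x - e*(sj$x-si$x)) * (sj$x - e*(sj$x-si$x)) - g x (T$x) * sj$x)"
  have cK: "convex (strategy_simplex :: (real^'m) set)" using c_convex by (simp add: convex_on_def)
  have wK: "w t \<in> strategy_simplex" if "0 \<le> t" "t \<le> 1" for t
    unfolding w_def using convexD[OF cK si sj, of "1-t" t] that by simp
  have si0: "0 \<le> si$x" for x using si by (simp add: strategy_simplex_def)
  have sj0: "0 \<le> sj$x" for x using sj by (simp add: strategy_simplex_def)
  have Ti: "T$x = si$x + a$x" for x by (simp add: T_def)
  have Tj: "T$x = sj$x + b$x" for x by (simp add: T_def ab)
  have bound: "(\<Sum>x\<in>UNIV. F x e) \<le> - \<kappa> * e" if e: "0 < e" "e \<le> 1/3" for e
  proof -
    have 1: "payoff u c (w e) a \<le> payoff u c si a" using opti wK e by simp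
    have 2: "payoff u c (w (1-e)) b \<le> payoff u c sj b" using optj wK e by simp
    have cb: "c (w e) - c si + c (w (1-e)) - c sj \<le> - \<kappa> * e"
      unfolding \<kappa>_def w_def by (rule cost_bound[OF c_convex si sj e])
    have eq: "(\<Sum>x\<in>UNIV. F x e) =
       ((\<Sum>x\<in>UNIV. u x (w e$x + a$x) / (w e$x + a$x) * w e$x) - (\<Sum>x\<in>UNIV. u x (si$x + a$x) / (si$x + a$x) * si$x))
     + ((\<Sum>x\<in>UNIV. u x (w (1-e)$x + b$x) / (w (1-e)$x + b$x) * w (1-e)$x) - (\<Sum>x\<in>UNIV. u x (sj$x + b$x) / (sj$x + b$x) * sj$x))"
    proof -
      have "F x e = (u x (w e$x + a$x) / (w e$x + a$x) * w e$x - u x (si$x + a$x) / (si$x + a$x) * si$x)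
          + (u x (w (1-e)$x + b$x) / (w (1-e)$x + b$x) * w (1-e)$x - u x (sj$x + b$x) / (sj$x + b$x) * sj$x)" for x
      proof -
        have A: "w e$x + a$x = T$x + e*(sj$x - si$x)" "w e $x = si$x + e*(sj$x-si$x)"
          "w (1-e)$x + b$x = T$x - e*(sj$x - si$x)" "w (1-e) $x = sj$x - e*(sj$x-si$x)"
          unfolding w_def using Ti[of x] Tj[of x] by (simp_all add: algebra_simps)
        have B: "si$x + e*(sj$x - si$x) + a$x = T$x + e*(sj$x - si$x)"
          "sj$x - e*(sj$x - si$x) + b$x = T$x - e*(sj$x - si$x)"
          using Ti[of x] Tj[of x] by simp_all
        show ?thesis unfolding F_def g_def by (simp only: A(2) A(4) B Ti[symmetric] Tj[symmetric])
      qed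
      then show ?thesis by (simp add: sum.distrib sum_subtractf)
    qed
    show ?thesis using 1 2 cb unfolding payoff_eq eq by linarith
  qed
  have der: "\<exists>D. (F x has_real_derivative D) (at 0) \<and> 0 \<le> D \<and>
      (sj$x \<noteq> si$x \<and> strictly_concave_on {0..} (u x) \<longrightarrow> 0 < D)" for x
  proof (cases "sj$x = si$x")
    case True
    then have "F x = (\<lambda>e. 0)" unfolding F_def by (simp add: algebra_simps)
    then show ?thesis using True by (intro exI[of _ 0]) auto
  next
    case False
    have Tpos: "0 < T$x" using Ti[of x] Tj[of x] si0[of x] sj0[of x] a0[of x] b0[of x] False by linarith
    have "u x differentiable (at (T$x))"
      using u_diff[of "T$x" x] Tpos at_within_interior[of "T$x" "{0..}"] by simp
    then obtain d where d: "(u x has_real_derivative d) (at (T$x))"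
      using real_differentiable_def by blast
    define Dg where "Dg = (d * T$x - u x (T$x)) / (T$x)^2"
    have dg: "(g x has_real_derivative Dg) (at (T$x))"
      unfolding g_def Dg_def using Tpos
      by (auto intro!: derivative_eq_intros d simp: power2_eq_square field_simps)
    have Fd: "(F x has_real_derivative (- Dg * (sj$x - si$x)^2)) (at 0)"
      unfolding F_def using coord_deriv[OF dg, where a="si$x" and b="sj$x"] by simp
    have tl: "u x 0 - u x (T$x) \<le> d * (0 - T$x)"
      by (rule tangent_le[OF u_concave u_zero Tpos d]) simp
    have "Dg \<le> 0" unfolding Dg_def using tl u_zero[of x] by (simp add: divide_le_0_iff)
    moreover have "Dg < 0" if "strictly_concave_on {0..} (u x)"
      using tangent_less[OF u_concave that u_zero Tpos d] Tpos unfolding Dg_def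
      by (simp add: divide_less_0_iff)
    ultimately show ?thesis using Fd False
      by (intro exI[of _ "- Dg * (sj$x - si$x)^2"]) (auto simp: mult_less_0_iff mult_nonpos_nonneg)
  qed
  then obtain D where D: "\<And>x. (F x has_real_derivative D x) (at 0)" "\<And>x. 0 \<le> D x"
    "\<And>x. sj$x \<noteq> si$x \<Longrightarrow> strictly_concave_on {0..} (u x) \<Longrightarrow> 0 < D x"
    by metis
  have k0: "0 \<le> \<kappa>" unfolding \<kappa>_def w_def by (rule cost_kappa(1)[OF c_convex si sj])
  have pos: "0 < (\<Sum>x\<in>UNIV. D x) + \<kappa>"
  proof (cases "strictly_convex_on strategy_simplex c")
    case True
    have "0 < \<kappa>" unfolding \<kappa>_def w_def by (rule cost_kappa(2)[OF c_convex si sj True ne])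
    moreover have "0 \<le> (\<Sum>x\<in>UNIV. D x)" using D(2) by (simp add: sum_nonneg)
    ultimately show ?thesis by simp
  next
    case False
    then have card: "card {x. \<not> strictly_concave_on {0..} (u x)} \<le> 1" using strict by blast
    obtain x1 where x1: "sj$x1 \<noteq> si$x1" using ne by (metis vec_eq_iff)
    have s1: "(\<Sum>x\<in>UNIV. si$x) = 1" "(\<Sum>x\<in>UNIV. sj$x) = 1"
      using si sj by (simp_all add: strategy_simplex_def)
    obtain x2 where x2: "x2 \<noteq> x1" "sj$x2 \<noteq> si$x2"
    proof (rule ccontr)
      assume "\<not> thesis"
      then have z: "\<And>x. x \<noteq> x1 \<Longrightarrow> sj$x - si$x = 0" using that by force
      have "(\<Sum>x\<in>UNIV. sj$x - si$x) = 0" using s1 by (simp add: sum_subtractf)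
      also have "(\<Sum>x\<in>UNIV. sj$x - si$x) = (sj$x1 - si$x1) + (\<Sum>x\<in>UNIV - {x1}. sj$x - si$x)"
        by (simp add: sum.remove)
      also have "(\<Sum>x\<in>UNIV - {x1}. sj$x - si$x) = 0" using z by (intro sum.neutral) auto
      finally show False using x1 by simp
    qed
    have "\<exists>x. sj$x \<noteq> si$x \<and> strictly_concave_on {0..} (u x)"
    proof (rule ccontr)
      assume "\<not> ?thesis"
      then have "{x1, x2} \<subseteq> {x. \<not> strictly_concave_on {0..} (u x)}" using x1 x2 by auto
      then have "card {x1, x2} \<le> card {x. \<not> strictly_concave_on {0..} (u x)}"
        by (intro card_mono) auto
      then show False using card x2 by simp
    qed
    then obtain x0 where "0 < D x0" using D(3) by blast
    then have "0 < (\<Sum>x\<in>UNIV. D x)" using D(2) by (intro sum_pos2[of UNIV x0]) auto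
    then show ?thesis using k0 by simp
  qed
  define G where "G = (\<lambda>e. (\<Sum>x\<in>UNIV. F x e) + \<kappa> * e)"
  have "(G has_real_derivative (\<Sum>x\<in>UNIV. D x) + \<kappa>) (at 0)"
    unfolding G_def by (auto intro!: derivative_eq_intros D(1))
  from DERIV_pos_inc_right[OF this pos] obtain d where d: "d > 0"
    "\<And>h. h > 0 \<Longrightarrow> h < d \<Longrightarrow> G 0 < G (0 + h)" by blast
  have G0: "G 0 = 0" unfolding G_def F_def by simp
  define h where "h = min (d/2) (1/3::real)"
  have "G 0 < G (0 + h)" using d unfolding h_def by auto
  moreover have "G h \<le> 0"
  proof -
    have "0 < h" "h \<le> 1/3" using d unfolding h_def by auto
    from bound[OF this] show ?thesis unfolding G_def by simp
  qed
  ultimately show False using G0 by simp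
qed


theorem proposition3:
  fixes n :: nat
    and u :: "'m::finite \<Rightarrow> real \<Rightarrow> real"
    and c :: "real ^ 'm \<Rightarrow> real"
    and S :: "nat \<Rightarrow> real ^ 'm"
  assumes u_nonneg: "\<And>x t. 0 \<le> t \<Longrightarrow> 0 \<le> u x t"
    and u_zero: "\<And>x. u x 0 = 0"
    and u_concave: "\<And>x. concave_on {0..} (u x)"
    and u_diff: "\<And>x t. 0 \<le> t \<Longrightarrow> u x differentiable (at t within {0..})"
    and c_nonneg: "\<And>s. s \<in> strategy_simplex \<Longrightarrow> 0 \<le> c s"
    and c_convex: "convex_on strategy_simplex c"
    and c_diff: "\<And>s. s \<in> strategy_simplex \<Longrightarrow> c differentiable (at s within strategy_simplex)"
    and strict: "card {x. \<not> strictly_concave_on {0..} (u x)} \<le> 1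
                 \<or> strictly_convex_on strategy_simplex c"
    and NE: "nash_equilibrium n u c S"
  shows "\<forall>i\<in>{1..n}. \<forall>j\<in>{1..n}. S i = S j"
proof (intro ballI, rule ccontr)
  fix i j assume i: "i \<in> {1..n}" and j: "j \<in> {1..n}" and ne: "S i \<noteq> S j"
  have inK: "\<And>k. k \<in> {1..n} \<Longrightarrow> S k \<in> strategy_simplex" using NE by (simp add: nash_equilibrium_def)
  have nn: "0 \<le> others n S k $ x" for k x
    unfolding others_def sum_component
    by (rule sum_nonneg) (use inK in \<open>auto simp: strategy_simplex_def\<close>)
  have tot: "S k + others n S k = sum S {1..n}" if "k \<in> {1..n}" for k
    unfolding others_def using sum.remove[of "{1..n}" k S] that by simp
  show False
  proof (rule core[OF u_zero u_concave u_diff c_convex strict inK[OF i] inK[OF j] nn nn])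
    show "S i + others n S i = S j + others n S j" using tot i j by simp
    show "\<And>y. y \<in> strategy_simplex \<Longrightarrow> payoff u c y (others n S i) \<le> payoff u c (S i) (others n S i)"
      using NE i by (simp add: nash_equilibrium_def)
    show "\<And>y. y \<in> strategy_simplex \<Longrightarrow> payoff u c y (others n S j) \<le> payoff u c (S j) (others n S j)"
      using NE j by (simp add: nash_equilibrium_def)
    show "S i \<noteq> S j" by (rule ne)
  qed
qed

end
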